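(* Let $n\ge 2$ and $k\ge 1$ be integers. (a) If $f\in M_{n,k}$, then $\mathcal{M}(n,k)\ge f(1)/f_0$. (b) Let $M\ge 2$ be an integer, let $h:[-1,1]\to[0,+\infty]$ be a potential function, and let $f\in L^{(h)}_{n,k}$. Then $\mathcal{L}_h(n,k,M)\ge M(f_0M-f(1))$. (c) Let $M\ge 2$ be an integer, let $h:[-1,1]\to[0,+\infty]$ be a potential function, and let $f\in U^{(h)}_{n,k}$. Then $\mathcal{U}_h(n,k,M)\le M(f_0M-f(1))$.
   Context: For $n\ge 2$, let $P_i^{(n)}(t)$ be the normalized Gegenbauer polynomials: $P_0^{(n)}=1$, $P_1^{(n)}=t$, and $(i+n-2)P_{i+1}^{(n)}(t)=(2i+n-2)tP_i^{(n)}(t)-iP_{i-1}^{(n)}(t)$ for $i\ge1$. A spherical code is a nonempty finite set $C\subset\mathbb{S}^{n-1}$. Its moments are $M_i(C)=\sum_{x,y\in C}P_i^{(n)}(\langle x,y\rangle)$ for $i\ge1$. $C$ is a spherical $(k,k)$-design if $M_{2i}(C)=0$ for $i=1,\dots,k$. Define: - $\mathcal{M}(n,k)=\min\{|C|: C\subset\mathbb{S}^{n-1}$ is a $(k,k)$-design$\}$. - For $h:[-1,1]\to[0,+\infty]$, the $h$-energy $E_h(C)=\sum_{x,y\in C,\,x\ne y}h(\langle x,y\rangle)$. - $\mathcal{L}_h(n,k,M)=\min\{E_h(C): C\subset\mathbb{S}^{n-1}$ a $(k,k)$-design, $|C|=M\}$ and $\mathcal{U}_h(n,k,M)=\max\{E_h(C)$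 over the same set$\}$. For a real polynomial $f$ of degree $m$, write its Gegenbauer expansion $f(t)=\sum_{i=0}^m f_iP_i^{(n)}(t)$. Define: - $F_{n,k}=\{f: f_0>0,\ f_i\le0$ for $i=1,3,\dots,2k-1$ and for all $i\ge 2k+1\}$. - $G_{n,k}=\{f: f_0>0,\ f_i\ge0$ for $i=1,3,\dots,2k-1$ and for all $i\ge2k+1\}$. - $M_{n,k}=\{f\in F_{n,k}: f(t)\ge0$ for all $t\in[-1,1]\}$. - $L^{(h)}_{n,k}=\{f\in G_{n,k}: f(t)\le h(t)$ for all $t\in[-1,1]\}$. - $U^{(h)}_{n,k}=\{f\in F_{n,k}: f(t)\ge h(t)$ for all $t\in[-1,1]\}$. *)

theory Defs
  imports "HOL-Analysis.Analysis" "HOL-Computational_Algebra.Polynomial" "HOL-Library.Extended_Real"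
begin

fun geg :: "nat \<Rightarrow> nat \<Rightarrow> real poly" where
  "geg n 0 = 1"
| "geg n (Suc 0) = [:0, 1:]"
| "geg n (Suc (Suc i)) =
     smult (1 / (real (Suc i) + real n - 2))
       (smult (2 * real (Suc i) + real n - 2) ([:0, 1:] * geg n (Suc i))
        - smult (real (Suc i)) (geg n i))"

definition geg_coeff :: "nat \<Rightarrow> real poly \<Rightarrow> nat \<Rightarrow> real" where
  "geg_coeff n f = (THE c. (\<forall>i > degree f. c i = 0) \<and>
                         f = (\<Sum>i\<le>degree f. smult (c i) (geg n i)))"

definition spherical_code :: "(real^'n::finite) set \<Rightarrow> bool" where
  "spherical_code C \<longleftrightarrow> finite C \<and> C \<noteq> {} \<and> C \<subseteq> sphere 0 1"

definition moment :: "nat \<Rightarrow> (real^('n::finite)) set \<Rightarrow> real" where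
  "moment i C = (\<Sum>x\<in>C. \<Sum>y\<in>C. poly (geg CARD('n) i) (x \<bullet> y))"

definition kk_design :: "nat \<Rightarrow> (real^'n::finite) set \<Rightarrow> bool" where
  "kk_design k C \<longleftrightarrow> spherical_code C \<and> (\<forall>i\<in>{1..k}. moment (2 * i) C = 0)"

definition min_design_size :: "('n::finite) itself \<Rightarrow> nat \<Rightarrow> ereal" where
  "min_design_size _ k = Inf {ereal (real (card C)) | C :: (real^'n) set. kk_design k C}"

definition h_energy :: "(real \<Rightarrow> ereal) \<Rightarrow> (real^('n::finite)) set \<Rightarrow> ereal" where
  "h_energy h C = (\<Sum>(x, y)\<in>{(x, y). x \<in> C \<and> y \<in> C \<and> x \<noteq> y}. h (x \<bullet> y))"

definition lower_energy :: "('n::finite) itself \<Rightarrow> (real \<Rightarrow> ereal) \<Rightarrow> nat \<Rightarrow> nat \<Rightarrow> ereal" where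
  "lower_energy _ h k M =
     Inf {h_energy h C | C :: (real^'n) set. kk_design k C \<and> card C = M}"

definition upper_energy :: "('n::finite) itself \<Rightarrow> (real \<Rightarrow> ereal) \<Rightarrow> nat \<Rightarrow> nat \<Rightarrow> ereal" where
  "upper_energy _ h k M =
     Sup {h_energy h C | C :: (real^'n) set. kk_design k C \<and> card C = M}"

definition F_class :: "nat \<Rightarrow> nat \<Rightarrow> real poly set" where
  "F_class n k = {f. geg_coeff n f 0 > 0 \<and>
      (\<forall>i. (odd i \<and> i < 2 * k) \<or> i \<ge> 2 * k + 1 \<longrightarrow> geg_coeff n f i \<le> 0)}"

definition G_class :: "nat \<Rightarrow> nat \<Rightarrow> real poly set" where
  "G_class n k = {f. geg_coeff n f 0 > 0 \<and>
      (\<forall>i. (odd i \<and> i < 2 * k) \<or> i \<ge> 2 * k + 1 \<longrightarrow> geg_coeff n f i \<ge> 0)}"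

definition M_class :: "nat \<Rightarrow> nat \<Rightarrow> real poly set" where
  "M_class n k = {f \<in> F_class n k. \<forall>t\<in>{-1..1}. poly f t \<ge> 0}"

definition L_class :: "nat \<Rightarrow> nat \<Rightarrow> (real \<Rightarrow> ereal) \<Rightarrow> real poly set" where
  "L_class n k h = {f \<in> G_class n k. \<forall>t\<in>{-1..1}. ereal (poly f t) \<le> h t}"

definition U_class :: "nat \<Rightarrow> nat \<Rightarrow> (real \<Rightarrow> ereal) \<Rightarrow> real poly set" where
  "U_class n k h = {f \<in> F_class n k. \<forall>t\<in>{-1..1}. ereal (poly f t) \<ge> h t}"

end

theory Submission
  imports Defs
begin

lemma x_mult_pCons: "[:0,1:] * p = pCons 0 (p::real poly)"
  by (simp add: mult_pCons_left)

lemma geg_rec_poly: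
  assumes "i \<ge> 1" "n \<ge> 2"
  shows "smult (real i + real n - 2) (geg n (Suc i)) =
    smult (2*real i + real n - 2) ([:0,1:] * geg n i) - smult (real i) (geg n (i-1))"
proof -
  obtain j where j: "i = Suc j" using assms by (cases i) auto
  have "real i + real n - 2 \<noteq> 0" using assms by linarith
  then show ?thesis using j by simp
qed

lemma geg_rec_pt:
  assumes "i \<ge> 1" "n \<ge> 2"
  shows "(real i + real n - 2) * poly (geg n (Suc i)) t =
    (2*real i + real n - 2) * t * poly (geg n i) t - real i * poly (geg n (i-1)) t"
  using arg_cong[OF geg_rec_poly[OF assms], of "\<lambda>p. poly p t"] by simp

lemma geg_drec_pt:
  assumes "i \<ge> 1" "n \<ge> 2"
  shows "(real i + real n - 2) * poly (pderiv (geg n (Suc i))) t =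
    (2*real i + real n - 2) * (poly (geg n i) t + t * poly (pderiv (geg n i)) t)
     - real i * poly (pderiv (geg n (i-1))) t"
  using arg_cong[OF geg_rec_poly[OF assms], of "\<lambda>p. poly (pderiv p) t"]
  by (simp add: pderiv_smult pderiv_diff pderiv_mult pderiv_pCons algebra_simps)

lemma geg_BE:
  assumes "i \<ge> 1" "n \<ge> 2"
  shows "\<forall>t. (real i + real n - 3) * t * poly (pderiv (geg n i)) t
                 - real i * poly (pderiv (geg n (i-1))) t
               = real i * (real i + real n - 3) * poly (geg n i) t
           \<and> (1 - t^2) * poly (pderiv (geg n i)) t
               = real i * (poly (geg n (i-1)) t - t * poly (geg n i) t)"
  using assms(1)
proof (induction i rule: nat_induct_at_least)
  case base
  then show ?case by (simp add: pderiv_pCons algebra_simps power2_eq_square)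
next
  case (Suc i)
  show ?case
  proof
    fix t
    define a where "a = poly (geg n i) t"
    define a' where "a' = poly (pderiv (geg n i)) t"
    define b where "b = poly (geg n (i-1)) t"
    define b' where "b' = poly (pderiv (geg n (i-1))) t"
    define c where "c = poly (geg n (Suc i)) t"
    define c' where "c' = poly (pderiv (geg n (Suc i))) t"
    have B: "(real i + real n - 3) * t * a' - real i * b' = real i * (real i + real n - 3) * a"
      and E: "(1 - t^2) * a' = real i * (b - t * a)"
      using Suc.IH unfolding a_def a'_def b_def b'_def by auto
    have R: "(real i + real n - 2) * c = (2*real i + real n - 2) * t * a - real i * b"
      using geg_rec_pt[OF Suc.hyps assms(2)] unfolding a_def b_def c_def by simp
    have D: "(real i + real n - 2) * c' = (2*real i + real n - 2) * (a + t * a') - real i * b'"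
      using geg_drec_pt[OF Suc.hyps assms(2)] unfolding a_def a'_def b'_def c'_def by simp
    have nz: "real i + real n - 2 \<noteq> 0" using Suc.hyps assms by linarith
    have D2: "(real i + real n - 2) * c' = (real i + 1) * ((real i + real n - 2) * a + t * a')"
      using D B by (simp add: algebra_simps)
    have G1: "(real (Suc i) + real n - 3) * t * c' - real (Suc i) * a' = real (Suc i) * (real (Suc i) + real n - 3) * c"
    proof -
      have "(real i + real n - 2) * ((real (Suc i) + real n - 3) * t * c' - real (Suc i) * a')
          = (real i + real n - 2) * (real (Suc i) * (real (Suc i) + real n - 3) * c)"
        using D2 R E by (simp add: algebra_simps power2_eq_square) algebra
      then show ?thesis using nz by simp
    qed
    have G2: "(1 - t^2) * c' = real (Suc i) * (a - t * c)"
    proof -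
      have "(real i + real n - 2) * ((1 - t^2) * c') = (real i + real n - 2) * (real (Suc i) * (a - t * c))"
        using D2 R E by (simp add: algebra_simps power2_eq_square) algebra
      then show ?thesis using nz by simp
    qed
    show "(real (Suc i) + real n - 3) * t * poly (pderiv (geg n (Suc i))) t -
          real (Suc i) * poly (pderiv (geg n (Suc i - 1))) t =
          real (Suc i) * (real (Suc i) + real n - 3) * poly (geg n (Suc i)) t \<and>
          (1 - t\<^sup>2) * poly (pderiv (geg n (Suc i))) t =
          real (Suc i) * (poly (geg n (Suc i - 1)) t - t * poly (geg n (Suc i)) t)"
      using G1 G2 unfolding a_def a'_def c_def c'_def by simp
  qed
qed

lemma geg_E_poly:
  assumes "i \<ge> 1" "n \<ge> 2"
  shows "[:1,0,-1:] * pderiv (geg n i) = smult (real i) (geg n (i-1) - [:0,1:] * geg n i)"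
proof -
  have "poly ([:1,0,-1:] * pderiv (geg n i)) = poly (smult (real i) (geg n (i-1) - [:0,1:] * geg n i))"
  proof
    fix t
    show "poly ([:1,0,-1:] * pderiv (geg n i)) t = poly (smult (real i) (geg n (i-1) - [:0,1:] * geg n i)) t"
      using geg_BE[OF assms] by (simp add: algebra_simps power2_eq_square)
  qed
  then show ?thesis by (simp add: poly_eq_poly_eq_iff)
qed

lemma geg_ODE_pt:
  assumes "n \<ge> 2"
  shows "(1 - t^2) * poly (pderiv (pderiv (geg n i))) t - (real n - 1) * t * poly (pderiv (geg n i)) t
         + real i * (real i + real n - 2) * poly (geg n i) t = 0"
proof (cases "i = 0")
  case True then show ?thesis by simp
next
  case False
  then have i1: "i \<ge> 1" by simp
  have E': "poly (pderiv ([:1,0,-1:] * pderiv (geg n i))) t = poly (pderiv (smult (real i) (geg n (i-1) - [:0,1:] * geg n i))) t"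
    using geg_E_poly[OF i1 assms] by simp
  have B: "(real i + real n - 3) * t * poly (pderiv (geg n i)) t
                 - real i * poly (pderiv (geg n (i-1))) t
               = real i * (real i + real n - 3) * poly (geg n i) t"
    using geg_BE[OF i1 assms] by blast
  have pq: "pderiv ([:1,0,-1:] * q) = [:1,0,-1:] * pderiv q + [:0,-2:] * q" for q :: "real poly"
    by (simp only: pderiv_mult) (simp add: pderiv_pCons)
  from E' have E2: "(1 - t^2) * poly (pderiv (pderiv (geg n i))) t - 2 * t * poly (pderiv (geg n i)) t
     = real i * (poly (pderiv (geg n (i-1))) t - poly (geg n i) t - t * poly (pderiv (geg n i)) t)"
    unfolding pq by (simp add: pderiv_mult pderiv_smult pderiv_diff pderiv_pCons algebra_simps power2_eq_square)
  show ?thesis using B E2 by (simp add: algebra_simps)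
qed

lemma geg_ODE_poly:
  assumes "n \<ge> 2"
  shows "[:1,0,-1:] * pderiv (pderiv (geg n i)) - smult (real n - 1) ([:0,1:] * pderiv (geg n i))
         + smult (real i * (real i + real n - 2)) (geg n i) = 0"
proof -
  have "poly ([:1,0,-1:] * pderiv (pderiv (geg n i)) - smult (real n - 1) ([:0,1:] * pderiv (geg n i))
         + smult (real i * (real i + real n - 2)) (geg n i)) = poly 0"
  proof
    fix t show "poly ([:1,0,-1:] * pderiv (pderiv (geg n i)) - smult (real n - 1) ([:0,1:] * pderiv (geg n i))
         + smult (real i * (real i + real n - 2)) (geg n i)) t = poly 0 t"
      using geg_ODE_pt[OF assms, of t i] by (simp add: algebra_simps power2_eq_square)
  qed
  then show ?thesis by (simp add: poly_eq_poly_eq_iff)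
qed

lemma coeff_quad_mult: "coeff ([:1,0,-1:] * q) m = coeff q m - (if m \<ge> 2 then coeff (q::real poly) (m-2) else 0)"
proof -
  have "[:1,0,-1:] * q = q - pCons 0 (pCons 0 q)"
    by (simp add: mult_pCons_left algebra_simps)
  then show ?thesis by (cases m; cases "m - 1"; simp)
qed

lemma geg_coeff_rec:
  assumes "n \<ge> 2"
  shows "real (m+2) * real (m+1) * coeff (geg n i) (m+2)
       = (real m - real i) * (real m + real i + real n - 2) * coeff (geg n i) m"
proof -
  have "coeff ([:1,0,-1:] * pderiv (pderiv (geg n i)) - smult (real n - 1) ([:0,1:] * pderiv (geg n i))
         + smult (real i * (real i + real n - 2)) (geg n i)) m = 0"
    using geg_ODE_poly[OF assms] by simp
  then have "real (m+2) * real (m+1) * coeff (geg n i) (m+2) - real m * (real m - 1) * coeff (geg n i) m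
     - (real n - 1) * real m * coeff (geg n i) m + real i * (real i + real n - 2) * coeff (geg n i) m = 0"
    apply (simp only: coeff_quad_mult coeff_add coeff_diff coeff_smult x_mult_pCons coeff_pderiv)
    apply (cases m; cases "m - 1"; simp add: coeff_pderiv algebra_simps numeral_2_eq_2)
    done
  then show ?thesis by (simp add: algebra_simps)
qed

lemma coeff_geg_SS:
  "coeff (geg n (Suc (Suc i))) m = (1 / (real (Suc i) + real n - 2)) *
     ((2 * real (Suc i) + real n - 2) * (if m = 0 then 0 else coeff (geg n (Suc i)) (m - 1))
      - real (Suc i) * coeff (geg n i) m)"
  by (simp add: x_mult_pCons coeff_pCons split: nat.split)

lemma geg_basic:
  assumes "n \<ge> 2"
  shows "(\<forall>m>i. coeff (geg n i) m = 0) \<and> coeff (geg n i) i > 0 \<and> (\<forall>m. odd (i+m) \<longrightarrow> coeff (geg n i) m = 0)"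
proof -
  have "((\<forall>m>i. coeff (geg n i) m = 0) \<and> coeff (geg n i) i > 0 \<and> (\<forall>m. odd (i+m) \<longrightarrow> coeff (geg n i) m = 0))
     \<and> ((\<forall>m>Suc i. coeff (geg n (Suc i)) m = 0) \<and> coeff (geg n (Suc i)) (Suc i) > 0
          \<and> (\<forall>m. odd (Suc i+m) \<longrightarrow> coeff (geg n (Suc i)) m = 0))"
  proof (induction i)
    case 0
    show ?case by (auto simp: coeff_pCons odd_pos split: nat.splits)
  next
    case (Suc i)
    have pos: "real (Suc i) + real n - 2 > 0" using assms by simp
    have p2: "2 * real (Suc i) + real n - 2 > 0" using assms by simp
    have A: "\<forall>m>Suc (Suc i). coeff (geg n (Suc (Suc i))) m = 0"
    proof (intro allI impI)
      fix m assume "m > Suc (Suc i)"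
      then show "coeff (geg n (Suc (Suc i))) m = 0"
        using Suc.IH by (simp only: coeff_geg_SS) (cases m; simp)
    qed
    have B: "coeff (geg n (Suc (Suc i))) (Suc (Suc i)) > 0"
      using Suc.IH pos p2 by (simp only: coeff_geg_SS) simp
    have C: "\<forall>m. odd (Suc (Suc i) + m) \<longrightarrow> coeff (geg n (Suc (Suc i))) m = 0"
    proof (intro allI impI)
      fix m assume "odd (Suc (Suc i) + m)"
      then show "coeff (geg n (Suc (Suc i))) m = 0"
        using Suc.IH by (simp only: coeff_geg_SS) (cases m; simp)
    qed
    show ?case using Suc.IH A B C by blast
  qed
  then show ?thesis by blast
qed

definition mdeg :: "('n::finite \<Rightarrow> nat) \<Rightarrow> nat" where "mdeg \<alpha> = (\<Sum>k\<in>UNIV. \<alpha> k)"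
definition Adeg :: "nat \<Rightarrow> ('n::finite \<Rightarrow> nat) set" where "Adeg d = {\<alpha>. mdeg \<alpha> = d}"
definition mfact :: "('n::finite \<Rightarrow> nat) \<Rightarrow> real" where "mfact \<alpha> = (\<Prod>k\<in>UNIV. fact (\<alpha> k))"
definition mpow :: "real^'n::finite \<Rightarrow> ('n \<Rightarrow> nat) \<Rightarrow> real" where
  "mpow y \<alpha> = (\<Prod>k\<in>UNIV. (y$k)^(\<alpha> k))"

lemma finite_Adeg: "finite (Adeg d :: ('n::finite \<Rightarrow> nat) set)"
proof -
  have "Adeg d \<subseteq> Pi\<^sub>E (UNIV::'n set) (\<lambda>_. {..d})"
  proof
    fix \<alpha> :: "'n \<Rightarrow> nat" assume "\<alpha> \<in> Adeg d"
    then have "\<alpha> k \<le> d" for k unfolding Adeg_def mdeg_def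
      using member_le_sum[of k UNIV \<alpha>] by auto
    then show "\<alpha> \<in> Pi\<^sub>E UNIV (\<lambda>_. {..d})" by auto
  qed
  moreover have "finite (Pi\<^sub>E (UNIV::'n set) (\<lambda>_. {..d}))" by (rule finite_PiE) auto
  ultimately show ?thesis by (rule finite_subset)
qed

lemma sum_upd: fixes \<beta> :: "'n::finite \<Rightarrow> 'b" shows "(\<Sum>k'\<in>UNIV. g k' ((\<beta>(k:=v)) k')) + g k (\<beta> k) = (\<Sum>k'\<in>UNIV. g k' (\<beta> k')) + (g k v :: 'a::comm_monoid_add)"
proof -
  have "(\<Sum>k'\<in>UNIV. g k' ((\<beta>(k:=v)) k')) = g k v + (\<Sum>k'\<in>UNIV-{k}. g k' ((\<beta>(k:=v)) k'))"
    by (subst sum.remove[of UNIV k]) auto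
  also have "(\<Sum>k'\<in>UNIV-{k}. g k' ((\<beta>(k:=v)) k')) = (\<Sum>k'\<in>UNIV-{k}. g k' (\<beta> k'))"
    by (rule sum.cong) auto
  finally show ?thesis
    by (subst (2) sum.remove[of UNIV k]) (auto simp: ac_simps)
qed

lemma prod_upd: fixes \<beta> :: "'n::finite \<Rightarrow> 'b" shows "(\<Prod>k'\<in>UNIV. g k' ((\<beta>(k:=v)) k')) * g k (\<beta> k) = (\<Prod>k'\<in>UNIV. g k' (\<beta> k')) * (g k v :: 'a::comm_monoid_mult)"
proof -
  have "(\<Prod>k'\<in>UNIV. g k' ((\<beta>(k:=v)) k')) = g k v * (\<Prod>k'\<in>UNIV-{k}. g k' ((\<beta>(k:=v)) k'))"
    by (subst prod.remove[of UNIV k]) auto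
  also have "(\<Prod>k'\<in>UNIV-{k}. g k' ((\<beta>(k:=v)) k')) = (\<Prod>k'\<in>UNIV-{k}. g k' (\<beta> k'))"
    by (rule prod.cong) auto
  finally show ?thesis
    by (subst (2) prod.remove[of UNIV k]) (auto simp: ac_simps)
qed

lemma mdeg_upd_add: "mdeg (\<beta>(k := \<beta> k + c)) = mdeg \<beta> + c"
  using sum_upd[of "\<lambda>_ x. x" \<beta> k "\<beta> k + c"] unfolding mdeg_def by simp

lemma mfact_pos: "mfact \<alpha> > 0"
  unfolding mfact_def by (rule prod_pos) auto

lemma mfact_nz[simp]: "mfact \<alpha> \<noteq> 0"
  using mfact_pos[of \<alpha>] by simp

lemma mfact_upd1: "mfact (\<beta>(k := \<beta> k + 1)) = mfact \<beta> * real (\<beta> k + 1)"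
proof -
  have "mfact (\<beta>(k := \<beta> k + 1)) * fact (\<beta> k) = mfact \<beta> * fact (\<beta> k + 1)"
    using prod_upd[of "\<lambda>_ x. (fact x :: real)" \<beta> k "\<beta> k + 1"] unfolding mfact_def by simp
  then have "mfact (\<beta>(k := \<beta> k + 1)) * fact (\<beta> k) = (mfact \<beta> * real (\<beta> k + 1)) * fact (\<beta> k)"
    by (simp add: algebra_simps)
  then show ?thesis by (subst (asm) mult_right_cancel) auto
qed

lemma mfact_upd2: "mfact (\<beta>(k := \<beta> k + 2)) = mfact \<beta> * real (\<beta> k + 1) * real (\<beta> k + 2)"
proof -
  have "mfact (\<beta>(k := \<beta> k + 2)) * fact (\<beta> k) = mfact \<beta> * fact (\<beta> k + 2)"
    using prod_upd[of "\<lambda>_ x. (fact x :: real)" \<beta> k "\<beta> k + 2"] unfolding mfact_def by simp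
  moreover have "(fact (\<beta> k + 2) :: real) = fact (\<beta> k) * real (\<beta> k + 1) * real (\<beta> k + 2)"
    by (simp add: numeral_2_eq_2 algebra_simps)
  ultimately have "mfact (\<beta>(k := \<beta> k + 2)) * fact (\<beta> k) = (mfact \<beta> * real (\<beta> k + 1) * real (\<beta> k + 2)) * fact (\<beta> k)"
    by (simp add: algebra_simps)
  then show ?thesis by (subst (asm) mult_right_cancel) auto
qed

lemma mpow_upd_add: "mpow y (\<beta>(k := \<beta> k + c)) = mpow y \<beta> * (y$k)^c"
proof (cases "y$k = 0")
  case False
  have "mpow y (\<beta>(k := \<beta> k + c)) * (y$k)^(\<beta> k) = mpow y \<beta> * (y$k)^(\<beta> k + c)"
    using prod_upd[of "\<lambda>k x. (y$k)^x" \<beta> k "\<beta> k + c"] unfolding mpow_def by simp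
  then show ?thesis using False by (simp add: power_add)
next
  case True
  show ?thesis
  proof (cases "c = 0")
    case True then show ?thesis by simp
  next
    case False
    have "mpow y (\<beta>(k := \<beta> k + c)) = 0" unfolding mpow_def
      using \<open>y$k = 0\<close> False by (intro prod_zero[of UNIV]) (auto intro!: bexI[of _ k])
    then show ?thesis using True False by simp
  qed
qed

lemma reindex_add:
  "(\<Sum>\<alpha>\<in>Adeg (d+c). if \<alpha> k \<ge> c then g \<alpha> else (0::real))
     = (\<Sum>\<beta>\<in>Adeg d. g (\<beta>(k := \<beta> k + c)))"
proof -
  have "(\<Sum>\<alpha>\<in>Adeg (d+c). if \<alpha> k \<ge> c then g \<alpha> else (0::real)) = (\<Sum>\<alpha>\<in>{\<alpha>\<in>Adeg (d+c). \<alpha> k \<ge> c}. g \<alpha>)"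
    by (rule sum.inter_filter[symmetric]) (rule finite_Adeg)
  also have "\<dots> = (\<Sum>\<beta>\<in>Adeg d. g (\<beta>(k := \<beta> k + c)))"
  proof (rule sum.reindex_bij_witness[where j = "\<lambda>\<alpha>. \<alpha>(k := \<alpha> k - c)" and i = "\<lambda>\<beta>. \<beta>(k := \<beta> k + c)"])
    fix \<alpha> assume a: "\<alpha> \<in> {\<alpha>\<in>Adeg (d+c). \<alpha> k \<ge> c}"
    then show "(\<alpha>(k := \<alpha> k - c))(k := (\<alpha>(k := \<alpha> k - c)) k + c) = \<alpha>" by auto
    then show "g ((\<alpha>(k := \<alpha> k - c))(k := (\<alpha>(k := \<alpha> k - c)) k + c)) = g \<alpha>" by simp
    have "mdeg ((\<alpha>(k := \<alpha> k - c))(k := (\<alpha>(k := \<alpha> k - c)) k + c)) = mdeg (\<alpha>(k := \<alpha> k - c)) + c"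
      by (rule mdeg_upd_add)
    then show "\<alpha>(k := \<alpha> k - c) \<in> Adeg d" using a by (auto simp: Adeg_def)
  next
    fix \<beta> :: "'a \<Rightarrow> nat" assume b: "\<beta> \<in> Adeg d"
    show "(\<beta>(k := \<beta> k + c))(k := (\<beta>(k := \<beta> k + c)) k - c) = \<beta>" by auto
    show "\<beta>(k := \<beta> k + c) \<in> {\<alpha>\<in>Adeg (d+c). \<alpha> k \<ge> c}" using b by (auto simp: Adeg_def mdeg_upd_add)
  qed
  finally show ?thesis .
qed

definition lap :: "(('n::finite \<Rightarrow> nat) \<Rightarrow> real) \<Rightarrow> ('n \<Rightarrow> nat) \<Rightarrow> real" where
  "lap p \<beta> = (\<Sum>k\<in>UNIV. real (\<beta> k + 1) * real (\<beta> k + 2) * p (\<beta>(k := \<beta> k + 2)))"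
definition mulr :: "(('n::finite \<Rightarrow> nat) \<Rightarrow> real) \<Rightarrow> ('n \<Rightarrow> nat) \<Rightarrow> real" where
  "mulr q \<alpha> = (\<Sum>k\<in>UNIV. if \<alpha> k \<ge> 2 then q (\<alpha>(k := \<alpha> k - 2)) else 0)"
definition fip :: "nat \<Rightarrow> (('n::finite \<Rightarrow> nat) \<Rightarrow> real) \<Rightarrow> (('n \<Rightarrow> nat) \<Rightarrow> real) \<Rightarrow> real" where
  "fip d p q = (\<Sum>\<alpha>\<in>Adeg d. mfact \<alpha> * p \<alpha> * q \<alpha>)"
definition ev :: "nat \<Rightarrow> (('n::finite \<Rightarrow> nat) \<Rightarrow> real) \<Rightarrow> real^'n \<Rightarrow> real" where
  "ev d p y = (\<Sum>\<alpha>\<in>Adeg d. p \<alpha> * mpow y \<alpha>)"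
definition mulx :: "real^'n::finite \<Rightarrow> (('n \<Rightarrow> nat) \<Rightarrow> real) \<Rightarrow> ('n \<Rightarrow> nat) \<Rightarrow> real" where
  "mulx x q \<alpha> = (\<Sum>k\<in>UNIV. if \<alpha> k \<ge> 1 then x$k * q (\<alpha>(k := \<alpha> k - 1)) else 0)"
definition lin :: "real^'n::finite \<Rightarrow> nat \<Rightarrow> ('n \<Rightarrow> nat) \<Rightarrow> real" where
  "lin x a \<alpha> = (if mdeg \<alpha> = a then fact a / mfact \<alpha> * mpow x \<alpha> else 0)"

lemma fip_lap_mulr: "fip d (lap p) q = fip (d+2) p (mulr q)"
proof -
  have "fip d (lap p) q = (\<Sum>\<beta>\<in>Adeg d. \<Sum>k\<in>UNIV. mfact (\<beta>(k:=\<beta> k+2)) * p (\<beta>(k:=\<beta> k+2)) * q \<beta>)"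
    unfolding fip_def lap_def sum_distrib_left sum_distrib_right
    by (intro sum.cong refl, subst mfact_upd2) (simp add: algebra_simps)
  also have "\<dots> = (\<Sum>k\<in>UNIV. \<Sum>\<beta>\<in>Adeg d. mfact (\<beta>(k:=\<beta> k+2)) * p (\<beta>(k:=\<beta> k+2)) * q \<beta>)"
    by (rule sum.swap)
  also have "\<dots> = (\<Sum>k\<in>UNIV. \<Sum>\<alpha>\<in>Adeg (d+2). if \<alpha> k \<ge> 2 then mfact \<alpha> * p \<alpha> * q (\<alpha>(k := \<alpha> k - 2)) else 0)"
    by (subst reindex_add) simp
  also have "\<dots> = (\<Sum>\<alpha>\<in>Adeg (d+2). \<Sum>k\<in>UNIV. if \<alpha> k \<ge> 2 then mfact \<alpha> * p \<alpha> * q (\<alpha>(k := \<alpha> k - 2)) else 0)"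
    by (rule sum.swap)
  also have "\<dots> = fip (d+2) p (mulr q)"
    unfolding fip_def mulr_def by (simp add: sum_distrib_left if_distrib cong: if_cong)
  finally show ?thesis .
qed

lemma mdeg_upd_sub: "\<alpha> k \<ge> c \<Longrightarrow> mdeg (\<alpha>(k := \<alpha> k - c)) + c = mdeg \<alpha>"
  using mdeg_upd_add[of "\<alpha>(k := \<alpha> k - c)" k c] by simp

lemma lap_mulr:
  "lap (mulr q) \<beta> = mulr (lap q) \<beta> + (2 * real CARD('n) + 4 * real (mdeg \<beta>)) * q \<beta>"
  for q :: "('n::finite \<Rightarrow> nat) \<Rightarrow> real"
proof -
  define T1 where "T1 l k = real (\<beta> l + 1) * real (\<beta> l + 2) *
      (if (\<beta>(l := \<beta> l + 2)) k \<ge> 2 then q ((\<beta>(l := \<beta> l + 2))(k := (\<beta>(l := \<beta> l + 2)) k - 2)) else 0)" for l k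
  define T2 where "T2 l k = (if \<beta> k \<ge> 2 then real ((\<beta>(k := \<beta> k - 2)) l + 1) * real ((\<beta>(k := \<beta> k - 2)) l + 2)
       * q ((\<beta>(k := \<beta> k - 2))(l := (\<beta>(k := \<beta> k - 2)) l + 2)) else 0)" for l k
  have L: "lap (mulr q) \<beta> = (\<Sum>l\<in>UNIV. \<Sum>k\<in>UNIV. T1 l k)"
    unfolding lap_def mulr_def T1_def by (simp add: sum_distrib_left)
  have R0: "mulr (lap q) \<beta> = (\<Sum>k\<in>UNIV. \<Sum>l\<in>UNIV. T2 l k)"
    unfolding lap_def mulr_def T2_def
    by (intro sum.cong refl, case_tac "2 \<le> \<beta> x") simp_all
  have R: "mulr (lap q) \<beta> = (\<Sum>l\<in>UNIV. \<Sum>k\<in>UNIV. T2 l k)"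
    unfolding R0 by (rule sum.swap)
  have D: "T1 l k - T2 l k = (if l = k then (4 * real (\<beta> k) + 2) * q \<beta> else 0)" for l k
  proof (cases "l = k")
    case True
    then show ?thesis unfolding T1_def T2_def
      by (cases "\<beta> k"; cases "\<beta> k - 1"; simp add: algebra_simps fun_upd_idem)
  next
    case False
    then have "(\<beta>(l := \<beta> l + 2))(k := \<beta> k - 2) = (\<beta>(k := \<beta> k - 2))(l := \<beta> l + 2)"
      by (auto simp: fun_eq_iff)
    then show ?thesis unfolding T1_def T2_def using False by simp
  qed
  have "lap (mulr q) \<beta> - mulr (lap q) \<beta> = (\<Sum>l\<in>UNIV. \<Sum>k\<in>UNIV. T1 l k - T2 l k)"
    unfolding L R by (simp add: sum_subtractf)
  also have "\<dots> = (\<Sum>l\<in>UNIV. (4 * real (\<beta> l) + 2) * q \<beta>)"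
    unfolding D by simp
  also have "\<dots> = (2 * real CARD('n) + 4 * real (mdeg \<beta>)) * q \<beta>"
    unfolding mdeg_def by (simp add: sum_distrib_right sum_distrib_left sum.distrib algebra_simps)
  finally show ?thesis by simp
qed

lemma inner_vec_sum: "(x::real^'n::finite) \<bullet> y = (\<Sum>k\<in>UNIV. x$k * y$k)"
  by (simp add: inner_vec_def)

lemma lap_lin: "lap (lin x a) \<beta> = real a * (real a - 1) * (x \<bullet> x) * lin x (a - 2) \<beta>"
proof (cases "mdeg \<beta> + 2 = a")
  case True
  have "lap (lin x a) \<beta> = (\<Sum>k\<in>UNIV. fact a / mfact \<beta> * mpow x \<beta> * (x$k * x$k))"
    unfolding lap_def
  proof (intro sum.cong refl)
    fix k
    show "real (\<beta> k + 1) * real (\<beta> k + 2) * lin x a (\<beta>(k := \<beta> k + 2)) = fact a / mfact \<beta> * mpow x \<beta> * (x$k * x$k)"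
    proof -
      have gen: "b1 > 0 \<Longrightarrow> b2 > 0 \<Longrightarrow> m > 0 \<Longrightarrow> b1*b2*(F/(m*b1*b2) * (P * X^2)) = F/m*P*(X*X)"
        for b1 b2 m F P X :: real by (simp add: field_simps power2_eq_square)
      show ?thesis unfolding lin_def mdeg_upd_add mfact_upd2 mpow_upd_add
        by (simp only: True simp_thms if_True) (rule gen, simp_all add: mfact_pos)
    qed
  qed
  also have "\<dots> = fact a / mfact \<beta> * mpow x \<beta> * (x \<bullet> x)"
    by (simp add: inner_vec_sum sum_distrib_left)
  also have "\<dots> = real a * (real a - 1) * (x \<bullet> x) * lin x (a - 2) \<beta>"
  proof -
    obtain b where b: "a = b + 2" "mdeg \<beta> = b" using True by auto
    have "(fact a :: real) = real a * (real a - 1) * fact b"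
      using b by (simp add: numeral_2_eq_2 algebra_simps)
    then show ?thesis unfolding lin_def using b by simp
  qed
  finally show ?thesis .
next
  case False
  have "lap (lin x a) \<beta> = 0" unfolding lap_def lin_def mdeg_upd_add using False by simp
  moreover have "real a * (real a - 1) * (x \<bullet> x) * lin x (a - 2) \<beta> = 0"
  proof (cases "a \<ge> 2")
    case True then show ?thesis using False unfolding lin_def by auto
  next
    case False then have "a = 0 \<or> a = 1" by auto
    then show ?thesis by auto
  qed
  ultimately show ?thesis by simp
qed

lemma ev_mulr: "ev (d+2) (mulr q) y = (y \<bullet> y) * ev d q y"
proof -
  have "ev (d+2) (mulr q) y = (\<Sum>k\<in>UNIV. \<Sum>\<alpha>\<in>Adeg (d+2). if \<alpha> k \<ge> 2 then q (\<alpha>(k := \<alpha> k - 2)) * mpow y \<alpha> else 0)"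
    unfolding ev_def mulr_def sum_distrib_right by (subst sum.swap) (intro sum.cong refl, simp)
  also have "\<dots> = (\<Sum>k\<in>UNIV. \<Sum>\<beta>\<in>Adeg d. q \<beta> * (mpow y \<beta> * (y$k * y$k)))"
    by (subst reindex_add, intro sum.cong refl, simp only: mpow_upd_add, simp add: power2_eq_square)
  also have "\<dots> = (y \<bullet> y) * ev d q y"
    unfolding ev_def inner_vec_sum sum_distrib_right sum_distrib_left
    by (subst sum.swap) (simp add: algebra_simps)
  finally show ?thesis .
qed

lemma ev_mulx: "ev (d+1) (mulx x q) y = (x \<bullet> y) * ev d q y"
proof -
  have "ev (d+1) (mulx x q) y = (\<Sum>k\<in>UNIV. \<Sum>\<alpha>\<in>Adeg (d+1). if \<alpha> k \<ge> 1 then x$k * q (\<alpha>(k := \<alpha> k - 1)) * mpow y \<alpha> else 0)"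
    unfolding ev_def mulx_def sum_distrib_right by (subst sum.swap) (intro sum.cong refl, simp)
  also have "\<dots> = (\<Sum>k\<in>UNIV. \<Sum>\<beta>\<in>Adeg d. x$k * q \<beta> * (mpow y \<beta> * y$k))"
    by (subst reindex_add, intro sum.cong refl, simp only: mpow_upd_add, simp)
  also have "\<dots> = (x \<bullet> y) * ev d q y"
    unfolding ev_def inner_vec_sum sum_distrib_right sum_distrib_left
    by (subst sum.swap) (simp add: algebra_simps)
  finally show ?thesis .
qed

lemma mulx_lin_term:
  "(if \<alpha> k \<ge> 1 then x$k * lin x a (\<alpha>(k := \<alpha> k - 1)) else 0)
    = (if mdeg \<alpha> = Suc a then fact a * real (\<alpha> k) / mfact \<alpha> * mpow x \<alpha> else 0)"
proof (cases "\<alpha> k \<ge> 1")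
  case True
  define \<gamma> where "\<gamma> = \<alpha>(k := \<alpha> k - 1)"
  have a: "\<alpha> = \<gamma>(k := \<gamma> k + 1)" using True unfolding \<gamma>_def by (auto simp: fun_eq_iff)
  have md: "mdeg \<alpha> = mdeg \<gamma> + 1" using a mdeg_upd_add by metis
  have mf: "mfact \<alpha> = mfact \<gamma> * real (\<alpha> k)" using a mfact_upd1[of \<gamma> k] True unfolding \<gamma>_def by simp
  have mp: "mpow x \<alpha> = mpow x \<gamma> * x$k" using a mpow_upd_add[of x \<gamma> k 1] by simp
  have nz: "real (\<alpha> k) \<noteq> 0" using True by simp
  show ?thesis using True md mf mp nz mfact_pos[of \<gamma>] unfolding lin_def \<gamma>_def[symmetric]
    by (simp add: field_simps)
next
  case False then show ?thesis by simp
qed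

lemma mulx_lin: "mulx x (lin x a) = lin x (Suc a)"
proof
  fix \<alpha>
  have "mulx x (lin x a) \<alpha> = (\<Sum>k\<in>UNIV. if mdeg \<alpha> = Suc a then fact a * real (\<alpha> k) / mfact \<alpha> * mpow x \<alpha> else 0)"
    unfolding mulx_def mulx_lin_term ..
  also have "\<dots> = lin x (Suc a) \<alpha>"
  proof (cases "mdeg \<alpha> = Suc a")
    case True
    have "(\<Sum>k\<in>UNIV. fact a * real (\<alpha> k) / mfact \<alpha> * mpow x \<alpha>) = fact a * real (mdeg \<alpha>) / mfact \<alpha> * mpow x \<alpha>"
      unfolding mdeg_def by (simp add: sum_distrib_left sum_distrib_right sum_divide_distrib[symmetric])
    then show ?thesis using True unfolding lin_def by (simp add: algebra_simps)
  next
    case False then show ?thesis unfolding lin_def by simp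
  qed
  finally show "mulx x (lin x a) \<alpha> = lin x (Suc a) \<alpha>" .
qed

lemma Adeg_0: "Adeg 0 = {(\<lambda>_. 0) :: 'n::finite \<Rightarrow> nat}"
  unfolding Adeg_def mdeg_def by (auto simp: fun_eq_iff)

lemma ev_lin: "ev a (lin x a) y = (x \<bullet> y) ^ a"
proof (induction a)
  case 0
  show ?case unfolding ev_def Adeg_0 lin_def by (simp add: mdeg_def mfact_def mpow_def)
next
  case (Suc a)
  show ?case using ev_mulx[of a x "lin x a" y] Suc unfolding mulx_lin by simp
qed

lemma fip_lin: "fip a p (lin y a) = fact a * ev a p y"
  unfolding fip_def ev_def lin_def Adeg_def sum_distrib_left
  using mfact_pos by (intro sum.cong refl) (simp add: field_simps)

definition supp :: "nat \<Rightarrow> (('n::finite \<Rightarrow> nat) \<Rightarrow> real) \<Rightarrow> bool" where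
  "supp d q \<longleftrightarrow> (\<forall>\<alpha>. mdeg \<alpha> \<noteq> d \<longrightarrow> q \<alpha> = 0)"

lemma supp_lin: "supp a (lin x a)"
  unfolding supp_def lin_def by simp

lemma supp_mulr: "supp d q \<Longrightarrow> supp (d+2) (mulr q)"
  unfolding supp_def mulr_def
proof (intro allI impI sum.neutral ballI)
  fix \<alpha> :: "'a \<Rightarrow> nat" and k
  assume q: "\<forall>\<alpha>. mdeg \<alpha> \<noteq> d \<longrightarrow> q \<alpha> = 0" and a: "mdeg \<alpha> \<noteq> d + 2"
  show "(if 2 \<le> \<alpha> k then q (\<alpha>(k := \<alpha> k - 2)) else 0) = 0"
  proof (cases "2 \<le> \<alpha> k")
    case True
    then have "mdeg (\<alpha>(k := \<alpha> k - 2)) \<noteq> d" using mdeg_upd_sub[of 2 \<alpha> k] True a by auto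
    then show ?thesis using q True by simp
  qed simp
qed

lemma supp_mulr_iter: "supp d q \<Longrightarrow> supp (d + 2*j) ((mulr ^^ j) q)"
  by (induction j) (auto dest: supp_mulr simp: add.assoc)

lemma mulr_lin2: "mulr (\<lambda>\<gamma>. f \<gamma> + c * g \<gamma>) \<beta> = mulr f \<beta> + c * mulr g \<beta>"
  unfolding mulr_def sum_distrib_left sum.distrib[symmetric] by (intro sum.cong refl) simp

lemma mulr_smult: "mulr (\<lambda>\<gamma>. c * g \<gamma>) = (\<lambda>\<beta>. c * mulr g \<beta>)"
  unfolding mulr_def by (auto simp: sum_distrib_left fun_eq_iff intro!: sum.cong)

lemma mulr_iter_smult: "(mulr ^^ j) (\<lambda>\<gamma>. c * g \<gamma>) = (\<lambda>\<beta>. c * (mulr ^^ j) g \<beta>)"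
  by (induction j) (auto simp: mulr_smult)

lemma lap_sum: "lap (\<lambda>\<alpha>. \<Sum>m\<in>S. c m * f m \<alpha>) \<beta> = (\<Sum>m\<in>S. c m * lap (f m) \<beta>)"
  unfolding lap_def sum_distrib_left by (subst sum.swap) (simp add: algebra_simps)

lemma fip_sum_right: "fip d p (\<lambda>\<alpha>. \<Sum>m\<in>S. c m * f m \<alpha>) = (\<Sum>m\<in>S. c m * fip d p (f m))"
  unfolding fip_def sum_distrib_left sum_distrib_right by (subst sum.swap) (simp add: algebra_simps)

lemma ev_sum: "ev d (\<lambda>\<alpha>. \<Sum>m\<in>S. c m * f m \<alpha>) y = (\<Sum>m\<in>S. c m * ev d (f m) y)"
  unfolding ev_def sum_distrib_left sum_distrib_right by (subst sum.swap) (simp add: algebra_simps)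

lemma fip_sum_l: "fip d (\<lambda>\<alpha>. \<Sum>x\<in>S. f x \<alpha>) q = (\<Sum>x\<in>S. fip d (f x) q)"
proof -
  have "fip d (\<lambda>\<alpha>. \<Sum>x\<in>S. f x \<alpha>) q = (\<Sum>\<alpha>\<in>Adeg d. \<Sum>x\<in>S. mfact \<alpha> * f x \<alpha> * q \<alpha>)"
    unfolding fip_def by (intro sum.cong refl) (simp add: sum_distrib_left sum_distrib_right)
  also have "\<dots> = (\<Sum>x\<in>S. \<Sum>\<alpha>\<in>Adeg d. mfact \<alpha> * f x \<alpha> * q \<alpha>)" by (rule sum.swap)
  finally show ?thesis unfolding fip_def .
qed

lemma fip_sum_r: "fip d p (\<lambda>\<alpha>. \<Sum>x\<in>S. f x \<alpha>) = (\<Sum>x\<in>S. fip d p (f x))"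
proof -
  have "fip d p (\<lambda>\<alpha>. \<Sum>x\<in>S. f x \<alpha>) = (\<Sum>\<alpha>\<in>Adeg d. \<Sum>x\<in>S. mfact \<alpha> * p \<alpha> * f x \<alpha>)"
    unfolding fip_def by (intro sum.cong refl) (simp add: sum_distrib_left sum_distrib_right)
  also have "\<dots> = (\<Sum>x\<in>S. \<Sum>\<alpha>\<in>Adeg d. mfact \<alpha> * p \<alpha> * f x \<alpha>)" by (rule sum.swap)
  finally show ?thesis unfolding fip_def .
qed

lemma fip_sums: "fip d (\<lambda>\<alpha>. \<Sum>x\<in>S. f x \<alpha>) (\<lambda>\<alpha>. \<Sum>y\<in>T. g y \<alpha>) = (\<Sum>x\<in>S. \<Sum>y\<in>T. fip d (f x) (g y))"
  unfolding fip_sum_l fip_sum_r ..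

lemma fip_self_nonneg: "fip d p p \<ge> 0"
proof -
  have "0 \<le> mfact \<alpha> * p \<alpha> * p \<alpha>" for \<alpha>
    using mfact_pos[of \<alpha>] by (simp add: mult.assoc)
  then show ?thesis unfolding fip_def by (intro sum_nonneg) auto
qed

lemma fip_zero_left: "(\<And>\<alpha>. p \<alpha> = 0) \<Longrightarrow> fip d p q = 0"
  unfolding fip_def by simp

lemma lap_mulr_iter:
  fixes q :: "('n::finite \<Rightarrow> nat) \<Rightarrow> real"
  assumes "supp d q"
  shows "lap ((mulr ^^ j) q) \<beta> = (mulr ^^ j) (lap q) \<beta>
           + real j * (2 * real CARD('n) + 4 * real d + 4 * real j - 4) * (mulr ^^ (j - 1)) q \<beta>"
proof (induction j arbitrary: \<beta>)
  case 0
  then show ?case by simp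
next
  case (Suc j)
  define r where "r = (mulr ^^ j) q"
  have sr: "supp (d + 2*j) r" unfolding r_def by (rule supp_mulr_iter[OF assms])
  have lr: "lap r = (\<lambda>\<gamma>. (mulr ^^ j) (lap q) \<gamma> + (real j * (2 * real CARD('n) + 4 * real d + 4 * real j - 4)) * (mulr ^^ (j - 1)) q \<gamma>)"
    unfolding r_def using Suc.IH by auto
  have "lap ((mulr ^^ Suc j) q) \<beta> = lap (mulr r) \<beta>" unfolding r_def by simp
  also have "\<dots> = mulr (lap r) \<beta> + (2 * real CARD('n) + 4 * real (mdeg \<beta>)) * r \<beta>"
    by (rule lap_mulr)
  also have "(2 * real CARD('n) + 4 * real (mdeg \<beta>)) * r \<beta> = (2 * real CARD('n) + 4 * real (d + 2*j)) * r \<beta>"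
    using sr unfolding supp_def by (cases "mdeg \<beta> = d + 2*j") auto
  also have "mulr (lap r) \<beta> = (mulr ^^ Suc j) (lap q) \<beta>
       + (real j * (2 * real CARD('n) + 4 * real d + 4 * real j - 4)) * mulr ((mulr ^^ (j - 1)) q) \<beta>"
    unfolding lr mulr_lin2 by simp
  also have "(real j * (2 * real CARD('n) + 4 * real d + 4 * real j - 4)) * mulr ((mulr ^^ (j - 1)) q) \<beta>
      = (real j * (2 * real CARD('n) + 4 * real d + 4 * real j - 4)) * r \<beta>"
    unfolding r_def by (cases j) auto
  finally show ?case unfolding r_def by (simp add: algebra_simps)
qed

lemma ev_mulr_iter: "ev (d + 2*j) ((mulr ^^ j) q) y = (y \<bullet> y)^j * ev d q y"
proof (induction j)
  case 0 then show ?case by simp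
next
  case (Suc j)
  have "ev (d + 2 * Suc j) ((mulr ^^ Suc j) q) y = ev ((d + 2*j) + 2) (mulr ((mulr ^^ j) q)) y" by simp
  also have "\<dots> = (y \<bullet> y) * ev (d + 2*j) ((mulr ^^ j) q) y" by (rule ev_mulr)
  finally show ?case using Suc by simp
qed

lemma geg_degree: "n \<ge> 2 \<Longrightarrow> degree (geg n i) = i"
  using geg_basic[of n i] by (intro antisym degree_le le_degree) auto

definition Zx :: "nat \<Rightarrow> real^'n::finite \<Rightarrow> ('n \<Rightarrow> nat) \<Rightarrow> real" where
  "Zx i x \<alpha> = (\<Sum>m\<le>i. coeff (geg CARD('n) i) m * (mulr ^^ ((i - m) div 2)) (lin x m) \<alpha>)"

lemma lap_Zx:
  fixes x :: "real^'n::finite"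
  assumes N: "CARD('n) \<ge> 2" and x: "x \<bullet> x = 1"
  shows "lap (Zx i x) \<beta> = 0"
proof -
  define N where "N = CARD('n)"
  define c where "c m = coeff (geg N i) m" for m
  define j where "j m = (i - m) div 2" for m
  define A where "A m = c m * (real m * (real m - 1)) * (mulr ^^ j m) (lin x (m - 2)) \<beta>" for m
  define G where "G m = c m * (real (j m) * (2 * real N + 4 * real m + 4 * real (j m) - 4)) * (mulr ^^ (j m - 1)) (lin x m) \<beta>" for m
  have N2: "N \<ge> 2" using N unfolding N_def .
  have deg0: "c m = 0" if "m > i" for m using geg_basic[OF N2, of i] that unfolding c_def by auto
  have par0: "c m = 0" if "odd (i + m)" for m using geg_basic[OF N2, of i] that unfolding c_def by auto
  have "lap (Zx i x) \<beta> = (\<Sum>m\<le>i. c m * lap ((mulr ^^ j m) (lin x m)) \<beta>)"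
    unfolding Zx_def c_def j_def N_def by (rule lap_sum)
  also have "\<dots> = (\<Sum>m\<le>i. A m + G m)"
  proof (intro sum.cong refl)
    fix m
    have ll: "lap (lin x m) = (\<lambda>\<gamma>. (real m * (real m - 1)) * lin x (m - 2) \<gamma>)"
      using lap_lin[of x m] x by auto
    show "c m * lap ((mulr ^^ j m) (lin x m)) \<beta> = A m + G m"
      unfolding lap_mulr_iter[OF supp_lin] A_def G_def ll mulr_iter_smult N_def
      by (simp add: algebra_simps)
  qed
  also have "\<dots> = (\<Sum>m\<le>i. A m) + (\<Sum>m\<le>i. G m)" by (rule sum.distrib)
  also have "(\<Sum>m\<le>i. A m) = (\<Sum>m\<le>i. A (m + 2))"
  proof -
    have "(\<Sum>m\<le>i. A m) = (\<Sum>m\<le>Suc (Suc i). A m)"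
      using deg0[of "Suc i"] deg0[of "Suc (Suc i)"] unfolding A_def by simp
    also have "\<dots> = A 0 + (A 1 + (\<Sum>m\<le>i. A (Suc (Suc m))))"
      unfolding sum.atMost_Suc_shift by simp
    also have "\<dots> = (\<Sum>m\<le>i. A (m + 2))" unfolding A_def by simp
    finally show ?thesis .
  qed
  also have "(\<Sum>m\<le>i. A (m + 2)) + (\<Sum>m\<le>i. G m) = (\<Sum>m\<le>i. A (m + 2) + G m)"
    by (rule sum.distrib[symmetric])
  also have "\<dots> = 0"
  proof (intro sum.neutral ballI)
    fix m assume "m \<in> {..i}"
    show "A (m + 2) + G m = 0"
    proof (cases "m + 2 \<le> i")
      case True
      have jj: "j (m + 2) = j m - 1" "j m \<ge> 1" unfolding j_def using True by auto
      have Aeq: "A (m + 2) = c (m + 2) * (real (m+2) * real (m+1)) * (mulr ^^ (j m - 1)) (lin x m) \<beta>"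
        unfolding A_def jj by simp
      show ?thesis
      proof (cases "odd (i + m)")
        case True
        then have "c m = 0" "c (m + 2) = 0" using par0[of m] par0[of "m+2"] by auto
        then show ?thesis unfolding Aeq G_def by simp
      next
        case False
        then have "even (i - m)" by simp
        then have "2 * j m = i - m" unfolding j_def by (rule even_two_times_div_two)
        then have "real (2 * j m) = real i - real m" using \<open>m + 2 \<le> i\<close> by simp
        then have ev2: "2 * real (j m) = real i - real m" by simp
        have rec: "real (m+2) * real (m+1) * c (m+2) = (real m - real i) * (real m + real i + real N - 2) * c m"
          unfolding c_def by (rule geg_coeff_rec[OF N2])
        have "c (m + 2) * (real (m+2) * real (m+1)) + c m * (real (j m) * (2 * real N + 4 * real m + 4 * real (j m) - 4)) = 0"
        proof -
          have "c m * (real (j m) * (2 * real N + 4 * real m + 4 * real (j m) - 4))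
              = c m * ((2 * real (j m)) * (real N + 2 * real m + (2 * real (j m)) - 2))"
            by (simp add: algebra_simps)
          also have "\<dots> = c m * ((real i - real m) * (real N + real m + real i - 2))"
            unfolding ev2 by (simp add: algebra_simps)
          finally show ?thesis using rec by (simp add: algebra_simps)
        qed
        moreover have "A (m + 2) + G m = (c (m + 2) * (real (m+2) * real (m+1)) + c m * (real (j m) * (2 * real N + 4 * real m + 4 * real (j m) - 4))) * (mulr ^^ (j m - 1)) (lin x m) \<beta>"
          unfolding Aeq G_def by (simp only: distrib_right mult.assoc)
        ultimately show ?thesis by simp
      qed
    next
      case False
      then have "c (m + 2) = 0" using deg0 by auto
      moreover have "j m = 0" unfolding j_def using False by auto
      ultimately show ?thesis unfolding A_def G_def by simp
    qed
  qed
  finally show ?thesis .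
qed

lemma ev_Zx:
  fixes x y :: "real^'n::finite"
  assumes N: "CARD('n) \<ge> 2" and y: "y \<bullet> y = 1"
  shows "ev i (Zx i x) y = poly (geg CARD('n) i) (x \<bullet> y)"
proof -
  define c where "c m = coeff (geg CARD('n) i) m" for m
  have par0: "c m = 0" if "odd (i + m)" for m using geg_basic[OF N, of i] that unfolding c_def by auto
  have "ev i (Zx i x) y = (\<Sum>m\<le>i. c m * ev i ((mulr ^^ ((i - m) div 2)) (lin x m)) y)"
    unfolding Zx_def c_def by (rule ev_sum)
  also have "\<dots> = (\<Sum>m\<le>i. c m * (x \<bullet> y) ^ m)"
  proof (intro sum.cong refl)
    fix m assume m: "m \<in> {..i}"
    show "c m * ev i ((mulr ^^ ((i - m) div 2)) (lin x m)) y = c m * (x \<bullet> y) ^ m"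
    proof (cases "odd (i + m)")
      case True then show ?thesis using par0 by simp
    next
      case False
      then have "even (i - m)" by simp
      then have "2 * ((i - m) div 2) = i - m" by (rule even_two_times_div_two)
      then have "i = m + 2 * ((i - m) div 2)" using m by simp
      then have "ev i ((mulr ^^ ((i - m) div 2)) (lin x m)) y = (y \<bullet> y) ^ ((i - m) div 2) * ev m (lin x m) y"
        using ev_mulr_iter[of m "(i - m) div 2" "lin x m" y] by simp
      then show ?thesis using y by (simp add: ev_lin)
    qed
  qed
  also have "\<dots> = poly (geg CARD('n) i) (x \<bullet> y)"
    unfolding poly_altdef geg_degree[OF N] c_def by (simp add: algebra_simps)
  finally show ?thesis .
qed

lemma fip_Zx:
  fixes x y :: "real^'n::finite"
  assumes N: "CARD('n) \<ge> 2" and x: "x \<bullet> x = 1" and y: "y \<bullet> y = 1"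
  shows "fip i (Zx i x) (Zx i y) = fact i * coeff (geg CARD('n) i) i * poly (geg CARD('n) i) (x \<bullet> y)"
proof -
  define c where "c m = coeff (geg CARD('n) i) m" for m
  have par0: "c m = 0" if "odd (i + m)" for m using geg_basic[OF N, of i] that unfolding c_def by auto
  have "fip i (Zx i x) (Zx i y) = (\<Sum>m\<le>i. c m * fip i (Zx i x) ((mulr ^^ ((i - m) div 2)) (lin y m)))"
    unfolding Zx_def[of i y] c_def by (rule fip_sum_right)
  also have "\<dots> = (\<Sum>m\<le>i. if m = i then c i * (fact i * ev i (Zx i x) y) else 0)"
  proof (intro sum.cong refl)
    fix m assume m: "m \<in> {..i}"
    show "c m * fip i (Zx i x) ((mulr ^^ ((i - m) div 2)) (lin y m)) = (if m = i then c i * (fact i * ev i (Zx i x) y) else 0)"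
    proof (cases "m = i")
      case True then show ?thesis by (simp add: fip_lin)
    next
      case False
      show ?thesis
      proof (cases "odd (i + m)")
        case True then show ?thesis using par0 False by simp
      next
        case ev: False
        then have "even (i - m)" by simp
        then have "2 * ((i - m) div 2) = i - m" by (rule even_two_times_div_two)
        then obtain k where k: "(i - m) div 2 = Suc k" "i = (i - 2) + 2" using m False
          by (cases "(i - m) div 2") auto
        have "fip i (Zx i x) ((mulr ^^ ((i - m) div 2)) (lin y m))
            = fip ((i - 2) + 2) (Zx i x) (mulr ((mulr ^^ k) (lin y m)))"
          using k by (metis comp_apply funpow.simps(2))
        also have "\<dots> = fip (i - 2) (lap (Zx i x)) ((mulr ^^ k) (lin y m))"
          by (rule fip_lap_mulr[symmetric])
        also have "\<dots> = 0" by (rule fip_zero_left) (rule lap_Zx[OF N x])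
        finally show ?thesis using False by simp
      qed
    qed
  qed
  also have "\<dots> = c i * (fact i * ev i (Zx i x) y)" by simp
  finally show ?thesis unfolding ev_Zx[OF N y] c_def by simp
qed

lemma moment_nonneg:
  fixes C :: "(real^'n::finite) set"
  assumes N: "CARD('n) \<ge> 2" and C: "C \<subseteq> sphere 0 1"
  shows "moment i C \<ge> 0"
proof -
  define c where "c = coeff (geg CARD('n) i) i"
  have cpos: "c > 0" using geg_basic[OF N, of i] unfolding c_def by auto
  have unit: "x \<bullet> x = 1" if "x \<in> C" for x
    using C that by (auto simp: power2_norm_eq_inner[symmetric])
  have "moment i C = (\<Sum>x\<in>C. \<Sum>y\<in>C. fip i (Zx i x) (Zx i y) / (fact i * c))"
    unfolding moment_def c_def using cpos unit fip_Zx[OF N] unfolding c_def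
    by (intro sum.cong refl) (simp add: field_simps)
  also have "\<dots> = fip i (\<lambda>\<alpha>. \<Sum>x\<in>C. Zx i x \<alpha>) (\<lambda>\<alpha>. \<Sum>y\<in>C. Zx i y \<alpha>) / (fact i * c)"
    unfolding fip_sums by (simp add: sum_divide_distrib)
  also have "\<dots> \<ge> 0" using cpos fip_self_nonneg by (intro divide_nonneg_pos) auto
  finally show ?thesis .
qed

lemma geg_indep:
  assumes N: "n \<ge> 2"
  shows "(\<Sum>i\<le>d. smult (e i) (geg n i)) = 0 \<Longrightarrow> \<forall>i\<le>d. e i = 0"
proof (induction d arbitrary: e)
  case 0
  then show ?case by simp
next
  case (Suc d)
  have "coeff (\<Sum>i\<le>Suc d. smult (e i) (geg n i)) (Suc d) = e (Suc d) * coeff (geg n (Suc d)) (Suc d)"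
  proof -
    have "coeff (\<Sum>i\<le>d. smult (e i) (geg n i)) (Suc d) = 0"
      unfolding coeff_sum using geg_basic[OF N] by (intro sum.neutral) auto
    then show ?thesis by (simp add: coeff_sum)
  qed
  moreover have "coeff (\<Sum>i\<le>Suc d. smult (e i) (geg n i)) (Suc d) = 0" unfolding Suc.prems by simp
  ultimately have "e (Suc d) * coeff (geg n (Suc d)) (Suc d) = 0" by simp
  then have "e (Suc d) = 0" using geg_basic[OF N, of "Suc d"] by simp
  then have "(\<Sum>i\<le>d. smult (e i) (geg n i)) = 0" using Suc.prems by simp
  then have "\<forall>i\<le>d. e i = 0" by (rule Suc.IH)
  then show ?case using \<open>e (Suc d) = 0\<close> by (auto simp: le_Suc_eq)
qed

lemma geg_exists:
  assumes N: "n \<ge> 2"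
  shows "degree f \<le> d \<Longrightarrow> \<exists>c. (\<forall>i>d. c i = 0) \<and> f = (\<Sum>i\<le>d. smult (c i) (geg n i))"
proof (induction d arbitrary: f)
  case 0
  then obtain a where "f = [:a:]" by (metis degree_0_id le_zero_eq)
  then show ?case by (intro exI[of _ "\<lambda>i. if i = 0 then a else 0"]) simp
next
  case (Suc d)
  define a where "a = coeff f (Suc d) / coeff (geg n (Suc d)) (Suc d)"
  define g where "g = f - smult a (geg n (Suc d))"
  have lc: "coeff (geg n (Suc d)) (Suc d) \<noteq> 0" using geg_basic[OF N, of "Suc d"] by simp
  have "degree g \<le> d"
  proof (rule degree_le, intro allI impI)
    fix i assume i: "d < i"
    show "coeff g i = 0"
    proof (cases "i = Suc d")
      case True then show ?thesis unfolding g_def a_def using lc by simp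
    next
      case False
      then have "i > Suc d" using i by simp
      then show ?thesis unfolding g_def using geg_basic[OF N, of "Suc d"] Suc.prems
        by (simp add: coeff_eq_0)
    qed
  qed
  then obtain c where c: "\<forall>i>d. c i = 0" "g = (\<Sum>i\<le>d. smult (c i) (geg n i))" using Suc.IH by blast
  define c' where "c' = c(Suc d := a)"
  have "(\<Sum>i\<le>d. smult (c' i) (geg n i)) = (\<Sum>i\<le>d. smult (c i) (geg n i))"
    unfolding c'_def by (intro sum.cong refl) auto
  then have "f = (\<Sum>i\<le>Suc d. smult (c' i) (geg n i))"
    using c(2) unfolding g_def by (simp add: c'_def algebra_simps)
  moreover have "\<forall>i>Suc d. c' i = 0" using c(1) unfolding c'_def by auto
  ultimately show ?case by blast
qed

lemma geg_coeff_prop: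
  assumes N: "n \<ge> 2"
  shows "(\<forall>i > degree f. geg_coeff n f i = 0) \<and>
         f = (\<Sum>i\<le>degree f. smult (geg_coeff n f i) (geg n i))"
proof -
  let ?P = "\<lambda>c. (\<forall>i > degree f. c i = 0) \<and> f = (\<Sum>i\<le>degree f. smult (c i) (geg n i))"
  have "\<exists>!c. ?P c"
  proof (rule ex_ex1I)
    show "\<exists>c. ?P c" using geg_exists[OF N, of f "degree f"] by simp
  next
    fix c1 c2 assume p1: "?P c1" and p2: "?P c2"
    have "(\<Sum>i\<le>degree f. smult (c1 i - c2 i) (geg n i)) = 0"
    proof -
      have "(\<Sum>i\<le>degree f. smult (c1 i - c2 i) (geg n i))
          = (\<Sum>i\<le>degree f. smult (c1 i) (geg n i)) - (\<Sum>i\<le>degree f. smult (c2 i) (geg n i))"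
        by (simp add: smult_diff_left sum_subtractf)
      then show ?thesis using p1 p2 by simp
    qed
    then have "\<forall>i\<le>degree f. c1 i - c2 i = 0" by (rule geg_indep[OF N])
    then show "c1 = c2" using p1 p2 by (auto simp: fun_eq_iff) (metis not_le)
  qed
  then have "?P (geg_coeff n f)" unfolding geg_coeff_def by (rule theI')
  then show ?thesis .
qed

lemma poly_geg_expansion:
  assumes N: "n \<ge> 2"
  shows "poly f t = (\<Sum>i\<le>degree f. geg_coeff n f i * poly (geg n i) t)"
proof -
  have "poly f t = poly (\<Sum>i\<le>degree f. smult (geg_coeff n f i) (geg n i)) t"
    using geg_coeff_prop[OF N, of f] by metis
  then show ?thesis by (simp add: poly_sum)
qed

lemma diag_split:
  assumes "finite C"
  shows "(\<Sum>x\<in>C. \<Sum>y\<in>C. g x y) = (\<Sum>x\<in>C. g x x) + (\<Sum>(x,y)\<in>{(x,y). x\<in>C \<and> y\<in>C \<and> x\<noteq>y}. g x y)"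
proof -
  have "(\<Sum>x\<in>C. \<Sum>y\<in>C. g x y) = (\<Sum>x\<in>C. g x x + (\<Sum>y\<in>C-{x}. g x y))"
    using assms by (intro sum.cong refl) (simp add: sum.remove)
  also have "\<dots> = (\<Sum>x\<in>C. g x x) + (\<Sum>x\<in>C. \<Sum>y\<in>C-{x}. g x y)" by (rule sum.distrib)
  also have "(\<Sum>x\<in>C. \<Sum>y\<in>C-{x}. g x y) = (\<Sum>(x,y)\<in>Sigma C (\<lambda>x. C-{x}). g x y)"
    using assms by (subst sum.Sigma) auto
  also have "Sigma C (\<lambda>x. C-{x}) = {(x,y). x\<in>C \<and> y\<in>C \<and> x\<noteq>y}" by auto
  finally show ?thesis .
qed

lemma inner_range:
  fixes x y :: "real^'n::finite"
  assumes "x \<in> sphere 0 1" "y \<in> sphere 0 1"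
  shows "x \<bullet> y \<in> {-1..1}"
proof -
  have "\<bar>x \<bullet> y\<bar> \<le> norm x * norm y" by (rule Cauchy_Schwarz_ineq2)
  moreover have "norm x = 1" "norm y = 1" using assms by simp_all
  ultimately have "\<bar>x \<bullet> y\<bar> \<le> 1" by simp
  then show ?thesis by (simp add: abs_le_iff)
qed

lemma inner_self_sphere:
  fixes x :: "real^'n::finite"
  assumes "x \<in> sphere 0 1" shows "x \<bullet> x = 1"
proof -
  have "norm x = 1" using assms by simp
  moreover have "x \<bullet> x = (norm x)^2" by (rule power2_norm_eq_inner[symmetric])
  ultimately show ?thesis by simp
qed

lemma design_sum:
  fixes C :: "(real^'n::finite) set"
  assumes N: "CARD('n) \<ge> 2"
  shows "(\<Sum>x\<in>C. \<Sum>y\<in>C. poly f (x \<bullet> y)) = (\<Sum>i\<le>degree f. geg_coeff CARD('n) f i * moment i C)"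
proof -
  have "(\<Sum>x\<in>C. \<Sum>y\<in>C. poly f (x \<bullet> y))
      = (\<Sum>x\<in>C. \<Sum>y\<in>C. \<Sum>i\<le>degree f. geg_coeff CARD('n) f i * poly (geg CARD('n) i) (x \<bullet> y))"
    by (intro sum.cong refl) (rule poly_geg_expansion[OF N])
  also have "\<dots> = (\<Sum>x\<in>C. \<Sum>i\<le>degree f. \<Sum>y\<in>C. geg_coeff CARD('n) f i * poly (geg CARD('n) i) (x \<bullet> y))"
    by (intro sum.cong refl) (rule sum.swap)
  also have "\<dots> = (\<Sum>i\<le>degree f. \<Sum>x\<in>C. \<Sum>y\<in>C. geg_coeff CARD('n) f i * poly (geg CARD('n) i) (x \<bullet> y))"
    by (rule sum.swap)
  also have "\<dots> = (\<Sum>i\<le>degree f. geg_coeff CARD('n) f i * moment i C)"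
    unfolding moment_def by (simp add: sum_distrib_left)
  finally show ?thesis .
qed

lemma moment_0: "moment 0 C = real (card C) ^ 2"
  unfolding moment_def by (simp add: power2_eq_square)

lemma design_moment_cases:
  assumes "kk_design k C" "i \<ge> 1"
  shows "moment i C = 0 \<or> (odd i \<and> i < 2 * k) \<or> i \<ge> 2 * k + 1"
proof (cases "i \<le> 2 * k")
  case True
  show ?thesis
  proof (cases "even i")
    case True
    then obtain i' where i': "i = 2 * i'" by blast
    then have "i' \<in> {1..k}" using \<open>i \<le> 2 * k\<close> assms(2) by auto
    then have "moment i C = 0" using assms(1) i' unfolding kk_design_def by blast
    then show ?thesis by simp
  next
    case False
    then have "i \<noteq> 2 * k" by auto
    then show ?thesis using False \<open>i \<le> 2 * k\<close> by auto
  qed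
next
  case False then show ?thesis by simp
qed

lemma sum_F_bound:
  fixes C :: "(real^'n::finite) set"
  assumes N: "CARD('n) \<ge> 2" and f: "f \<in> F_class CARD('n) k" and C: "kk_design k C"
  shows "(\<Sum>i\<le>degree f. geg_coeff CARD('n) f i * moment i C) \<le> geg_coeff CARD('n) f 0 * real (card C) ^ 2"
proof -
  have sph: "C \<subseteq> sphere 0 1" using C unfolding kk_design_def spherical_code_def by auto
  have "(\<Sum>i\<le>degree f. geg_coeff CARD('n) f i * moment i C)
      \<le> (\<Sum>i\<le>degree f. if i = 0 then geg_coeff CARD('n) f 0 * moment 0 C else 0)"
  proof (rule sum_mono)
    fix i assume "i \<in> {..degree f}"
    show "geg_coeff CARD('n) f i * moment i C \<le> (if i = 0 then geg_coeff CARD('n) f 0 * moment 0 C else 0)"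
    proof (cases "i = 0")
      case False
      then have "moment i C = 0 \<or> (odd i \<and> i < 2 * k) \<or> i \<ge> 2 * k + 1"
        using design_moment_cases[OF C] by simp
      moreover have "moment i C \<ge> 0" by (rule moment_nonneg[OF N sph])
      ultimately show ?thesis using f False unfolding F_class_def
        by (auto intro: mult_nonpos_nonneg)
    qed simp
  qed
  also have "\<dots> = geg_coeff CARD('n) f 0 * real (card C) ^ 2" by (simp add: moment_0)
  finally show ?thesis .
qed

lemma sum_G_bound:
  fixes C :: "(real^'n::finite) set"
  assumes N: "CARD('n) \<ge> 2" and f: "f \<in> G_class CARD('n) k" and C: "kk_design k C"
  shows "(\<Sum>i\<le>degree f. geg_coeff CARD('n) f i * moment i C) \<ge> geg_coeff CARD('n) f 0 * real (card C) ^ 2"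
proof -
  have sph: "C \<subseteq> sphere 0 1" using C unfolding kk_design_def spherical_code_def by auto
  have "geg_coeff CARD('n) f 0 * real (card C) ^ 2 = (\<Sum>i\<le>degree f. if i = 0 then geg_coeff CARD('n) f 0 * moment 0 C else 0)"
    by (simp add: moment_0)
  also have "\<dots> \<le> (\<Sum>i\<le>degree f. geg_coeff CARD('n) f i * moment i C)"
  proof (rule sum_mono)
    fix i assume "i \<in> {..degree f}"
    show "(if i = 0 then geg_coeff CARD('n) f 0 * moment 0 C else 0) \<le> geg_coeff CARD('n) f i * moment i C"
    proof (cases "i = 0")
      case False
      then have "moment i C = 0 \<or> (odd i \<and> i < 2 * k) \<or> i \<ge> 2 * k + 1"
        using design_moment_cases[OF C] by simp
      moreover have "moment i C \<ge> 0" by (rule moment_nonneg[OF N sph])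
      ultimately show ?thesis using f False unfolding G_class_def by auto
    qed simp
  qed
  finally show ?thesis .
qed

lemma offdiag_sum:
  fixes C :: "(real^'n::finite) set"
  assumes C: "kk_design k C"
  shows "(\<Sum>(x,y)\<in>{(x,y). x\<in>C \<and> y\<in>C \<and> x\<noteq>y}. poly f (x \<bullet> y))
       = (\<Sum>x\<in>C. \<Sum>y\<in>C. poly f (x \<bullet> y)) - real (card C) * poly f 1"
proof -
  have fin: "finite C" and sph: "C \<subseteq> sphere 0 1" using C unfolding kk_design_def spherical_code_def by auto
  have "(\<Sum>x\<in>C. poly f (x \<bullet> x)) = (\<Sum>x\<in>C. poly f 1)"
  proof (intro sum.cong refl)
    fix x assume "x \<in> C"
    then have "x \<bullet> x = 1" using sph inner_self_sphere by blast
    then show "poly f (x \<bullet> x) = poly f 1" by simp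
  qed
  then have "(\<Sum>x\<in>C. poly f (x \<bullet> x)) = real (card C) * poly f 1" by simp
  then show ?thesis using diag_split[OF fin, of "\<lambda>x y. poly f (x \<bullet> y)"] by simp
qed

lemma part_a:
  fixes f :: "real poly"
  assumes N: "CARD('n::finite) \<ge> 2" and fM: "f \<in> M_class CARD('n) k"
  shows "min_design_size TYPE('n) k \<ge> ereal (poly f 1 / geg_coeff CARD('n) f 0)"
proof -
  define OD where "OD C = {(x,y). x\<in>C \<and> y\<in>C \<and> x\<noteq>y}" for C :: "(real^'n) set"
    have fF: "f \<in> F_class CARD('n) k" and fpos: "\<forall>t\<in>{-1..1}. poly f t \<ge> 0"
    using fM unfolding M_class_def by auto
  have f0: "geg_coeff CARD('n) f 0 > 0" using fF unfolding F_class_def by auto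
  show "min_design_size TYPE('n) k \<ge> ereal (poly f 1 / geg_coeff CARD('n) f 0)"
    unfolding min_design_size_def
  proof (rule Inf_greatest, clarify)
    fix C :: "(real^'n) set" assume C: "kk_design k C"
    have fin: "finite C" and ne: "C \<noteq> {}" and sph: "C \<subseteq> sphere 0 1"
      using C unfolding kk_design_def spherical_code_def by auto
    have cpos: "real (card C) > 0" using fin ne by (simp add: card_gt_0_iff)
    have "(\<Sum>(x,y)\<in>OD C. poly f (x \<bullet> y)) \<ge> 0"
    proof (intro sum_nonneg)
      fix p assume "p \<in> OD C"
      then obtain x y where p: "p = (x,y)" "x \<in> C" "y \<in> C" unfolding OD_def by auto
      then have "x \<bullet> y \<in> {-1..1}" using sph inner_range by blast
      then show "0 \<le> (case p of (x, y) \<Rightarrow> poly f (x \<bullet> y))" using fpos p by simp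
    qed
    then have "real (card C) * poly f 1 \<le> geg_coeff CARD('n) f 0 * real (card C) ^ 2"
      using offdiag_sum[OF C, of f] design_sum[OF N, of f C] sum_F_bound[OF N fF C]
      unfolding OD_def by linarith
    then have "poly f 1 \<le> geg_coeff CARD('n) f 0 * real (card C)"
      using cpos by (simp add: power2_eq_square mult.commute mult.left_commute)
    then have "poly f 1 / geg_coeff CARD('n) f 0 \<le> real (card C)"
      using f0 by (simp add: divide_le_eq mult.commute)
    then show "ereal (poly f 1 / geg_coeff CARD('n) f 0) \<le> ereal (real (card C))" by simp
  qed
qed

lemma part_b:
  fixes f :: "real poly" and h :: "real \<Rightarrow> ereal"
  assumes N: "CARD('n::finite) \<ge> 2" and fL: "f \<in> L_class CARD('n) k h"
  shows "lower_energy TYPE('n) h k M \<ge> ereal (real M * (geg_coeff CARD('n) f 0 * real M - poly f 1))"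
proof -
  define OD where "OD C = {(x,y). x\<in>C \<and> y\<in>C \<and> x\<noteq>y}" for C :: "(real^'n) set"
    have fG: "f \<in> G_class CARD('n) k" and fh: "\<forall>t\<in>{-1..1}. ereal (poly f t) \<le> h t"
    using fL unfolding L_class_def by auto
  show "lower_energy TYPE('n) h k M \<ge> ereal (real M * (geg_coeff CARD('n) f 0 * real M - poly f 1))"
    unfolding lower_energy_def
  proof (rule Inf_greatest)
    fix z assume "z \<in> {h_energy h C |C :: (real^'n) set. kk_design k C \<and> card C = M}"
    then obtain C :: "(real^'n) set" where C: "kk_design k C" and cM: "card C = M" and z: "z = h_energy h C" by blast
    have sph: "C \<subseteq> sphere 0 1" using C unfolding kk_design_def spherical_code_def by auto
    have "ereal (\<Sum>(x,y)\<in>OD C. poly f (x \<bullet> y)) = (\<Sum>(x,y)\<in>OD C. ereal (poly f (x \<bullet> y)))"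
      by (simp add: case_prod_beta)
    also have "\<dots> \<le> (\<Sum>(x,y)\<in>OD C. h (x \<bullet> y))"
    proof (intro sum_mono)
      fix p assume "p \<in> OD C"
      then obtain x y where p: "p = (x,y)" "x \<in> C" "y \<in> C" unfolding OD_def by auto
      then have "x \<bullet> y \<in> {-1..1}" using sph inner_range by blast
      then show "(case p of (x, y) \<Rightarrow> ereal (poly f (x \<bullet> y))) \<le> (case p of (x, y) \<Rightarrow> h (x \<bullet> y))"
        using fh p by simp
    qed
    finally have E: "ereal (\<Sum>(x,y)\<in>OD C. poly f (x \<bullet> y)) \<le> h_energy h C"
      unfolding h_energy_def OD_def .
    have "real M * (geg_coeff CARD('n) f 0 * real M - poly f 1) \<le> (\<Sum>(x,y)\<in>OD C. poly f (x \<bullet> y))"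
      using offdiag_sum[OF C, of f] design_sum[OF N, of f C] sum_G_bound[OF N fG C] cM
      unfolding OD_def by (simp add: power2_eq_square algebra_simps)
    then show "ereal (real M * (geg_coeff CARD('n) f 0 * real M - poly f 1)) \<le> z"
      using E unfolding z by (meson ereal_less_eq(3) order_trans)
  qed
qed

lemma part_c:
  fixes f :: "real poly" and h :: "real \<Rightarrow> ereal"
  assumes N: "CARD('n::finite) \<ge> 2" and fU: "f \<in> U_class CARD('n) k h"
  shows "upper_energy TYPE('n) h k M \<le> ereal (real M * (geg_coeff CARD('n) f 0 * real M - poly f 1))"
proof -
  define OD where "OD C = {(x,y). x\<in>C \<and> y\<in>C \<and> x\<noteq>y}" for C :: "(real^'n) set"
    have fF: "f \<in> F_class CARD('n) k" and fh: "\<forall>t\<in>{-1..1}. ereal (poly f t) \<ge> h t"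
    using fU unfolding U_class_def by auto
  show "upper_energy TYPE('n) h k M \<le> ereal (real M * (geg_coeff CARD('n) f 0 * real M - poly f 1))"
    unfolding upper_energy_def
  proof (rule Sup_least)
    fix z assume "z \<in> {h_energy h C |C :: (real^'n) set. kk_design k C \<and> card C = M}"
    then obtain C :: "(real^'n) set" where C: "kk_design k C" and cM: "card C = M" and z: "z = h_energy h C" by blast
    have sph: "C \<subseteq> sphere 0 1" using C unfolding kk_design_def spherical_code_def by auto
    have "h_energy h C = (\<Sum>(x,y)\<in>OD C. h (x \<bullet> y))" unfolding h_energy_def OD_def ..
    also have "\<dots> \<le> (\<Sum>(x,y)\<in>OD C. ereal (poly f (x \<bullet> y)))"
    proof (intro sum_mono)
      fix p assume "p \<in> OD C"
      then obtain x y where p: "p = (x,y)" "x \<in> C" "y \<in> C" unfolding OD_def by auto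
      then have "x \<bullet> y \<in> {-1..1}" using sph inner_range by blast
      then show "(case p of (x, y) \<Rightarrow> h (x \<bullet> y)) \<le> (case p of (x, y) \<Rightarrow> ereal (poly f (x \<bullet> y)))"
        using fh p by simp
    qed
    also have "\<dots> = ereal (\<Sum>(x,y)\<in>OD C. poly f (x \<bullet> y))"
      by (simp add: case_prod_beta)
    finally have E: "h_energy h C \<le> ereal (\<Sum>(x,y)\<in>OD C. poly f (x \<bullet> y))" .
    have "(\<Sum>(x,y)\<in>OD C. poly f (x \<bullet> y)) \<le> real M * (geg_coeff CARD('n) f 0 * real M - poly f 1)"
      using offdiag_sum[OF C, of f] design_sum[OF N, of f C] sum_F_bound[OF N fF C] cM
      unfolding OD_def by (simp add: power2_eq_square algebra_simps)
    then show "z \<le> ereal (real M * (geg_coeff CARD('n) f 0 * real M - poly f 1))"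
      using E unfolding z by (meson ereal_less_eq(3) order_trans)
  qed
qed

theorem mainTheorem1:
  fixes k :: nat
  assumes "CARD('n::finite) \<ge> 2" and "k \<ge> 1"
  shows "(\<forall>f \<in> M_class CARD('n) k.
            min_design_size TYPE('n) k \<ge> ereal (poly f 1 / geg_coeff CARD('n) f 0))
       \<and> (\<forall>(M::nat) (h::real \<Rightarrow> ereal). M \<ge> 2 \<longrightarrow> (\<forall>t\<in>{-1..1}. h t \<ge> 0) \<longrightarrow>
            (\<forall>f \<in> L_class CARD('n) k h.
               lower_energy TYPE('n) h k M \<ge>
                 ereal (real M * (geg_coeff CARD('n) f 0 * real M - poly f 1))))
       \<and> (\<forall>(M::nat) (h::real \<Rightarrow> ereal). M \<ge> 2 \<longrightarrow> (\<forall>t\<in>{-1..1}. h t \<ge> 0) \<longrightarrow>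
            (\<forall>f \<in> U_class CARD('n) k h.
               upper_energy TYPE('n) h k M \<le>
                 ereal (real M * (geg_coeff CARD('n) f 0 * real M - poly f 1))))"
  apply (intro conjI allI ballI impI)
    apply (rule part_a[OF assms(1)], assumption)
   apply (rule part_b[OF assms(1)], assumption)
  apply (rule part_c[OF assms(1)], assumption)
  done

end
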